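(* Let $s_0\ge1$ be an integer and let $f=(f_1,f_2)$ and $g=(g_1,g_2)$ be smooth vector fields on $\mathbb{T}^2$. Then \begin{align*} \Big|\int_{\mathbb{T}^2}\partial^{s_0}(f\cdot\nabla g)\cdot\partial^{s_0}g\,dx\Big| \lesssim\;&\Big(\|\nabla f_1\|_{H^{[\frac{s_0}{2}]+1}}\|\partial_1g\|_{H^{s_0-1}}+\|\nabla f_2\|_{H^{[\frac{s_0}{2}]+1}}\|\partial_2g\|_{H^{s_0-1}}\Big)\|g\|_{\dot H^{s_0}}\\ &+\Big(\|\nabla f_1\|_{H^{s_0-1}}\|\partial_1g\|_{H^{[\frac{s_0}{2}]+2}}+\|\nabla f_2\|_{H^{s_0-1}}\|\partial_2g\|_{H^{[\frac{s_0}{2}]+2}}\Big)\|g\|_{\dot H^{s_0}}\\ &+\|\nabla\cdot f\|_{H^2}\|g\|_{\dot H^{s_0}}^2. \end{align*}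
   Context: $\mathbb{T}^2=[-\pi,\pi]^2$ is the periodic domain. $\partial^{s_0}$ denotes any partial derivative $\partial_1^{\alpha_1}\partial_2^{\alpha_2}$ with $\alpha_1+\alpha_2=s_0$, applied componentwise; $f\cdot\nabla g=f_1\partial_1g+f_2\partial_2g$. $[\cdot]$ is the integer part and $\dot H^{s_0}$ the homogeneous Sobolev seminorm. $A\lesssim B$ means $A\le CB$ with a constant $C$ depending only on $s_0$. *)

theory Defs
  imports "HOL-Analysis.Analysis"
begin

text \<open>Scalar functions on the plane; periodic ones are functions on the torus T^2 = [-pi,pi]^2.\<close>
type_synonym sfun = "real \<times> real \<Rightarrow> real"

definition pd1 :: "sfun \<Rightarrow> sfun" where
  "pd1 u = (\<lambda>(x, y). deriv (\<lambda>t. u (t, y)) x)"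

definition pd2 :: "sfun \<Rightarrow> sfun" where
  "pd2 u = (\<lambda>(x, y). deriv (\<lambda>t. u (x, t)) y)"

fun pdl :: "bool list \<Rightarrow> sfun \<Rightarrow> sfun" where
  "pdl [] u = u"
| "pdl (d # ds) u = (if d then pd1 else pd2) (pdl ds u)"

definition pdm :: "nat \<Rightarrow> nat \<Rightarrow> sfun \<Rightarrow> sfun" where
  "pdm a b u = (pd1 ^^ a) ((pd2 ^^ b) u)"

definition smooth_periodic :: "sfun \<Rightarrow> bool" where
  "smooth_periodic u \<longleftrightarrow>
     (\<forall>ds. pdl ds u differentiable_on UNIV) \<and>
     (\<forall>x y. u (x + 2 * pi, y) = u (x, y) \<and> u (x, y + 2 * pi) = u (x, y))"

definition T2 :: "(real \<times> real) set" where
  "T2 = {-pi..pi} \<times> {-pi..pi}"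

definition L2sq :: "sfun \<Rightarrow> real" where
  "L2sq u = integral T2 (\<lambda>z. (u z)\<^sup>2)"

definition Hsq :: "nat \<Rightarrow> sfun \<Rightarrow> real" where
  "Hsq k u = (\<Sum>(a, b) \<in> {(a, b). a + b \<le> k}. L2sq (pdm a b u))"

definition Hnorm :: "nat \<Rightarrow> sfun \<Rightarrow> real" where
  "Hnorm k u = sqrt (Hsq k u)"

definition Hdotsq :: "nat \<Rightarrow> sfun \<Rightarrow> real" where
  "Hdotsq k u = (\<Sum>(a, b) \<in> {(a, b). a + b = k}. L2sq (pdm a b u))"

definition Hnorm2 :: "nat \<Rightarrow> sfun \<Rightarrow> sfun \<Rightarrow> real" where
  "Hnorm2 k u1 u2 = sqrt (Hsq k u1 + Hsq k u2)"

definition Hdotnorm2 :: "nat \<Rightarrow> sfun \<Rightarrow> sfun \<Rightarrow> real" where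
  "Hdotnorm2 k u1 u2 = sqrt (Hdotsq k u1 + Hdotsq k u2)"

text \<open>Component i of f . grad g, where g_i is that component.\<close>
definition advect :: "sfun \<Rightarrow> sfun \<Rightarrow> sfun \<Rightarrow> sfun" where
  "advect f1 f2 gi = (\<lambda>z. f1 z * pd1 gi z + f2 z * pd2 gi z)"

end

theory Submission
  imports Defs
begin

definition line :: "bool \<Rightarrow> real \<times> real \<Rightarrow> real \<Rightarrow> real \<times> real" where
  "line d z t = (if d then (t, snd z) else (fst z, t))"
definition coord :: "bool \<Rightarrow> real \<times> real \<Rightarrow> real" where
  "coord d z = (if d then fst z else snd z)"
definition pdd :: "bool \<Rightarrow> sfun \<Rightarrow> sfun" where "pdd d = (if d then pd1 else pd2)"

lemma pdl_Cons: "pdl (d#ds) u = pdd d (pdl ds u)" by (simp add: pdd_def)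
declare pdl.simps(2)[simp del]

lemma pdd_eq: "pdd d u z = deriv (\<lambda>t. u (line d z t)) (coord d z)"
  by (cases z) (auto simp: pdd_def pd1_def pd2_def line_def coord_def)

lemma line_diff: "(line d z) differentiable (at t)"
  unfolding line_def by (cases d) (auto intro!: derivative_intros simp: differentiable_def)

lemma pdd_deriv:
  assumes "u differentiable (at (line d z t))"
  shows "((\<lambda>s. u (line d z s)) has_real_derivative pdd d u (line d z t)) (at t)"
proof -
  have "(u \<circ> line d z) differentiable (at t)"
    by (rule differentiable_chain_at[OF line_diff assms])
  then have "((\<lambda>s. u (line d z s)) has_real_derivative deriv (\<lambda>s. u (line d z s)) t) (at t)"
    by (simp add: DERIV_deriv_iff_real_differentiable o_def)
  moreover have "pdd d u (line d z t) = deriv (\<lambda>s. u (line d z s)) t"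
    unfolding pdd_eq by (simp add: line_def coord_def)
  ultimately show ?thesis by simp
qed

lemma line_self: "line d z (coord d z) = z"
  by (cases z) (simp add: line_def coord_def)

lemma pdd_at: "u differentiable (at z) \<Longrightarrow> ((\<lambda>s. u (line d z s)) has_real_derivative pdd d u z) (at (coord d z))"
  using pdd_deriv[of u d z "coord d z"] by (simp add: line_self)

lemma line_line: "line d (line d z t) = line d z"
  by (rule ext) (simp add: line_def)

lemma don_at: "u differentiable_on UNIV \<Longrightarrow> u differentiable (at z)"
  by (simp add: differentiable_on_def)

lemma pdd_add:
  assumes "u differentiable_on UNIV" "v differentiable_on UNIV"
  shows "pdd d (\<lambda>z. u z + v z) = (\<lambda>z. pdd d u z + pdd d v z)"
proof (rule ext)
  fix z
  have "((\<lambda>s. u (line d z s) + v (line d z s)) has_real_derivative pdd d u z + pdd d v z) (at (coord d z))"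
    using assms by (auto intro!: DERIV_add pdd_at don_at)
  then show "pdd d (\<lambda>z. u z + v z) z = pdd d u z + pdd d v z"
    unfolding pdd_eq[of d "\<lambda>z. u z + v z"] by (rule DERIV_imp_deriv)
qed

lemma pdd_mult:
  assumes "u differentiable_on UNIV" "v differentiable_on UNIV"
  shows "pdd d (\<lambda>z. u z * v z) = (\<lambda>z. pdd d u z * v z + u z * pdd d v z)"
proof (rule ext)
  fix z
  have "((\<lambda>s. u (line d z s) * v (line d z s)) has_real_derivative u (line d z (coord d z)) * pdd d v z + pdd d u z * v (line d z (coord d z))) (at (coord d z))"
    by (rule DERIV_mult'[OF pdd_at[OF don_at[OF assms(1)]] pdd_at[OF don_at[OF assms(2)]]])
  then have "pdd d (\<lambda>z. u z * v z) z = u z * pdd d v z + pdd d u z * v z"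
    unfolding pdd_eq[of d "\<lambda>z. u z * v z"] line_self by (rule DERIV_imp_deriv)
  then show "pdd d (\<lambda>z. u z * v z) z = pdd d u z * v z + u z * pdd d v z" by simp
qed

lemma pdd_cmult:
  assumes "u differentiable_on UNIV"
  shows "pdd d (\<lambda>z. c * u z) = (\<lambda>z. c * pdd d u z)"
proof (rule ext)
  fix z
  have "((\<lambda>s. c * u (line d z s)) has_real_derivative c * pdd d u z) (at (coord d z))"
    using assms by (auto intro!: DERIV_cmult pdd_at don_at)
  then show "pdd d (\<lambda>z. c * u z) z = c * pdd d u z"
    unfolding pdd_eq[of d "\<lambda>z. c * u z"] by (rule DERIV_imp_deriv)
qed

lemma pdd_zero: "pdd d (\<lambda>z. 0) = (\<lambda>z. 0)"
  by (rule ext) (simp add: pdd_eq)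

lemma diff_on_sum_list:
  "(\<And>x. x \<in> set L \<Longrightarrow> F x differentiable_on UNIV) \<Longrightarrow> (\<lambda>z. \<Sum>x\<leftarrow>L. F x z) differentiable_on UNIV"
  by (induction L) (auto intro!: derivative_intros)

lemma pdd_sum_list:
  "(\<And>x. x \<in> set L \<Longrightarrow> F x differentiable_on UNIV) \<Longrightarrow>
   pdd d (\<lambda>z. \<Sum>x\<leftarrow>L. F x z) = (\<lambda>z. \<Sum>x\<leftarrow>L. pdd d (F x) z)"
proof (induction L)
  case Nil then show ?case by (simp add: pdd_zero)
next
  case (Cons a L)
  have "pdd d (\<lambda>z. F a z + (\<Sum>x\<leftarrow>L. F x z)) = (\<lambda>z. pdd d (F a) z + pdd d (\<lambda>z. \<Sum>x\<leftarrow>L. F x z) z)"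
    by (rule pdd_add) (use Cons in \<open>auto intro!: diff_on_sum_list\<close>)
  then show ?case using Cons by simp
qed


definition Sm :: "sfun \<Rightarrow> bool" where "Sm u \<longleftrightarrow> (\<forall>ds. pdl ds u differentiable_on UNIV)"

lemma pdl_append: "pdl (ds @ es) u = pdl ds (pdl es u)"
  by (induction ds) (auto simp: pdl_Cons)

lemma Sm_pdl: "Sm u \<Longrightarrow> Sm (pdl es u)"
  unfolding Sm_def by (metis pdl_append)

lemma Sm_pdd: "Sm u \<Longrightarrow> Sm (pdd d u)"
  using Sm_pdl[of u "[d]"] by (simp add: pdl_Cons)

lemma Sm_pd1: "Sm u \<Longrightarrow> Sm (pd1 u)" and Sm_pd2: "Sm u \<Longrightarrow> Sm (pd2 u)"
  using Sm_pdd[of u True] Sm_pdd[of u False] by (auto simp: pdd_def)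

lemma Sm_don: "Sm u \<Longrightarrow> u differentiable_on UNIV"
  unfolding Sm_def by (metis pdl.simps(1))

lemma Sm_diff: "Sm u \<Longrightarrow> u differentiable (at z)"
  by (rule don_at[OF Sm_don])

lemma Sm_cont: "Sm u \<Longrightarrow> continuous_on S u"
  using Sm_don differentiable_imp_continuous_on continuous_on_subset by blast

lemma Sm_isCont: "Sm u \<Longrightarrow> isCont u z"
  using Sm_cont[of u UNIV] continuous_on_eq_continuous_at[of UNIV u] by (cases z) simp

definition Smn :: "nat \<Rightarrow> sfun \<Rightarrow> bool" where
  "Smn n u \<longleftrightarrow> (\<forall>ds. length ds \<le> n \<longrightarrow> pdl ds u differentiable_on UNIV)"

lemma pdl_add_n:
  assumes "Smn n u" "Smn n v" "length ds \<le> Suc n"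
  shows "pdl ds (\<lambda>z. u z + v z) = (\<lambda>z. pdl ds u z + pdl ds v z)"
  using assms(3)
proof (induction ds)
  case Nil then show ?case by simp
next
  case (Cons d ds)
  then have "length ds \<le> n" by simp
  then have "pdl ds u differentiable_on UNIV" "pdl ds v differentiable_on UNIV"
    using assms unfolding Smn_def by auto
  then show ?case using Cons by (simp add: pdl_Cons pdd_add)
qed

lemma pdl_add:
  assumes "Sm u" "Sm v"
  shows "pdl ds (\<lambda>z. u z + v z) = (\<lambda>z. pdl ds u z + pdl ds v z)"
  by (rule pdl_add_n[of "length ds"]) (use assms in \<open>auto simp: Smn_def Sm_def\<close>)

lemma Sm_add: "Sm u \<Longrightarrow> Sm v \<Longrightarrow> Sm (\<lambda>z. u z + v z)"
  unfolding Sm_def using pdl_add[unfolded Sm_def] by (simp add: differentiable_on_add)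

lemma pdl_cmult: "Sm u \<Longrightarrow> pdl ds (\<lambda>z. c * u z) = (\<lambda>z. c * pdl ds u z)"
proof (induction ds)
  case Nil then show ?case by simp
next
  case (Cons d ds) then show ?case
    by (simp add: pdl_Cons pdd_cmult Sm_don Sm_pdl)
qed

lemma Sm_cmult: "Sm u \<Longrightarrow> Sm (\<lambda>z. c * u z)"
  unfolding Sm_def using pdl_cmult[unfolded Sm_def] by (simp add: differentiable_on_mult)

lemma Smn_mult: "Sm u \<Longrightarrow> Sm v \<Longrightarrow> Smn n (\<lambda>z. u z * v z)"
proof (induction n arbitrary: u v)
  case 0 then show ?case by (simp add: Smn_def) (intro differentiable_on_mult Sm_don)
next
  case (Suc n)
  show ?case unfolding Smn_def
  proof (intro allI impI)
    fix ds :: "bool list" assume len: "length ds \<le> Suc n"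
    show "pdl ds (\<lambda>z. u z * v z) differentiable_on UNIV"
    proof (cases ds rule: rev_cases)
      case Nil then show ?thesis using Suc.prems by (simp add: differentiable_on_mult Sm_don)
    next
      case (snoc es d)
      then have les: "length es \<le> n" using len by simp
      have pm: "pdd d (\<lambda>z. u z * v z) = (\<lambda>z. pdd d u z * v z + u z * pdd d v z)"
        by (rule pdd_mult) (use Suc.prems in \<open>auto intro: Sm_don\<close>)
      have s1: "Smn n (\<lambda>z. pdd d u z * v z)" by (rule Suc.IH) (use Suc.prems in \<open>auto intro: Sm_pdd\<close>)
      have s2: "Smn n (\<lambda>z. u z * pdd d v z)" by (rule Suc.IH) (use Suc.prems in \<open>auto intro: Sm_pdd\<close>)
      have "pdl ds (\<lambda>z. u z * v z) = pdl es (\<lambda>z. pdd d u z * v z + u z * pdd d v z)"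
        using snoc pm by (simp add: pdl_append pdl_Cons)
      also have "\<dots> = (\<lambda>z. pdl es (\<lambda>z. pdd d u z * v z) z + pdl es (\<lambda>z. u z * pdd d v z) z)"
        by (rule pdl_add_n[OF s1 s2]) (use les in simp)
      finally show ?thesis using s1 s2 les unfolding Smn_def
        by (simp add: differentiable_on_add)
    qed
  qed
qed

lemma Sm_mult: assumes "Sm u" "Sm v" shows "Sm (\<lambda>z. u z * v z)"
  unfolding Sm_def
proof
  fix ds :: "bool list"
  from assms have "Smn (length ds) (\<lambda>z. u z * v z)" by (rule Smn_mult)
  then show "pdl ds (\<lambda>z. u z * v z) differentiable_on UNIV" unfolding Smn_def by simp
qed

lemma Sm_const: "Sm (\<lambda>z. c)"
proof -
  have "pdl ds (\<lambda>z. c) = (if ds = [] then (\<lambda>z. c) else (\<lambda>z. 0))" for ds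
    by (induction ds) (auto simp: pdl_Cons pdd_zero pdd_eq)
  then show ?thesis unfolding Sm_def by simp
qed


definition tm :: "sfun \<Rightarrow> sfun \<Rightarrow> bool list \<times> bool list \<Rightarrow> sfun" where
  "tm u v pq = (\<lambda>z. pdl (fst pq) u z * pdl (snd pq) v z)"

fun R :: "bool list \<Rightarrow> (bool list \<times> bool list) list" where
  "R [] = []"
| "R (d # ds) = ([d], ds) # map (\<lambda>x. (fst x, d # snd x)) (R ds) @ map (\<lambda>x. (d # fst x, snd x)) (R ds)"

lemma R_props: "x \<in> set (R ds) \<Longrightarrow> fst x \<noteq> [] \<and> length (fst x) + length (snd x) = length ds"
  by (induction ds arbitrary: x) auto

lemma R_length: "length (R ds) + 1 = 2 ^ length ds"
  by (induction ds) auto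

lemma tm_diff: "Sm u \<Longrightarrow> Sm v \<Longrightarrow> tm u v x differentiable_on UNIV"
  unfolding tm_def by (intro differentiable_on_mult Sm_don Sm_pdl)

lemma leibniz:
  assumes "Sm u" "Sm v"
  shows "pdl ds (\<lambda>z. u z * v z) = (\<lambda>z. u z * pdl ds v z + (\<Sum>x\<leftarrow>R ds. tm u v x z))"
proof (induction ds)
  case Nil then show ?case by simp
next
  case (Cons d ds)
  have d1: "(\<lambda>z. u z * pdl ds v z) differentiable_on UNIV"
    using assms by (intro differentiable_on_mult Sm_don Sm_pdl)
  have d2: "(\<lambda>z. \<Sum>x\<leftarrow>R ds. tm u v x z) differentiable_on UNIV"
    using assms by (intro diff_on_sum_list tm_diff)
  have e1: "pdd d (\<lambda>z. u z * pdl ds v z) = (\<lambda>z. pdd d u z * pdl ds v z + u z * pdl (d # ds) v z)"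
    using assms by (simp add: pdd_mult Sm_don Sm_pdl pdl_Cons)
  have e2: "pdd d (\<lambda>z. \<Sum>x\<leftarrow>R ds. tm u v x z) = (\<lambda>z. \<Sum>x\<leftarrow>R ds. pdd d (tm u v x) z)"
    using assms by (intro pdd_sum_list tm_diff)
  have e3: "pdd d (tm u v x) = (\<lambda>z. tm u v (d # fst x, snd x) z + tm u v (fst x, d # snd x) z)" for x
    using assms unfolding tm_def by (simp add: pdd_mult Sm_don Sm_pdl pdl_Cons)
  have "pdl (d # ds) (\<lambda>z. u z * v z) = pdd d (\<lambda>z. u z * pdl ds v z + (\<Sum>x\<leftarrow>R ds. tm u v x z))"
    using Cons by (simp add: pdl_Cons)
  also have "\<dots> = (\<lambda>z. pdd d (\<lambda>z. u z * pdl ds v z) z + pdd d (\<lambda>z. \<Sum>x\<leftarrow>R ds. tm u v x z) z)"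
    by (rule pdd_add[OF d1 d2])
  also have "\<dots> = (\<lambda>z. u z * pdl (d # ds) v z + (\<Sum>x\<leftarrow>R (d # ds). tm u v x z))"
    unfolding e1 e2 e3 by (rule ext) (simp add: sum_list_addf o_def tm_def pdl_Cons algebra_simps)
  finally show ?case .
qed

lemma pd1_at: "u differentiable (at (x, y)) \<Longrightarrow> ((\<lambda>t. u (t, y)) has_real_derivative pd1 u (x, y)) (at x)"
  using pdd_deriv[of u True "(x, y)" x] by (simp add: line_def pdd_def)

lemma pd2_at: "u differentiable (at (x, y)) \<Longrightarrow> ((\<lambda>t. u (x, t)) has_real_derivative pd2 u (x, y)) (at y)"
  using pdd_deriv[of u False "(x, y)" y] by (simp add: line_def pdd_def)

lemma dist_pair_lt: "\<bar>a - c\<bar> < h \<Longrightarrow> \<bar>b - d\<bar> < h \<Longrightarrow> dist (a, b) (c, d) < 2 * h"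
proof -
  assume "\<bar>a - c\<bar> < h" "\<bar>b - d\<bar> < h"
  moreover have "dist (a, b) (c, d) \<le> \<bar>a - c\<bar> + \<bar>b - d\<bar>"
    unfolding dist_Pair_Pair dist_real_def using sqrt_sum_squares_le_sum_abs by simp
  ultimately show ?thesis by simp
qed

lemma clairaut_pt:
  assumes "Sm u"
  shows "pd1 (pd2 u) (x, y) = pd2 (pd1 u) (x, y)"
proof -
  define A where "A = pd2 (pd1 u)"
  define B where "B = pd1 (pd2 u)"
  have SA: "Sm A" unfolding A_def using assms by (intro Sm_pd1 Sm_pd2)
  have SB: "Sm B" unfolding B_def using assms by (intro Sm_pd1 Sm_pd2)
  have du: "\<And>p. u differentiable (at p)" using assms by (rule Sm_diff)
  have d1u: "\<And>p. pd1 u differentiable (at p)" using assms by (intro Sm_diff Sm_pd1)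
  have d2u: "\<And>p. pd2 u differentiable (at p)" using assms by (intro Sm_diff Sm_pd2)
  have small: "\<bar>A (x, y) - B (x, y)\<bar> < 2 * e" if e: "e > 0" for e
  proof -
    obtain dA where dA: "dA > 0" "\<And>p. dist p (x, y) < dA \<Longrightarrow> dist (A p) (A (x, y)) < e"
      using Sm_isCont[OF SA, of "(x, y)"] e unfolding continuous_at_eps_delta by blast
    obtain dB where dB: "dB > 0" "\<And>p. dist p (x, y) < dB \<Longrightarrow> dist (B p) (B (x, y)) < e"
      using Sm_isCont[OF SB, of "(x, y)"] e unfolding continuous_at_eps_delta by blast
    define h where "h = min dA dB / 2"
    have h: "h > 0" "2 * h \<le> dA" "2 * h \<le> dB" using dA dB by (auto simp: h_def)
    define D where "D = u (x + h, y + h) - u (x + h, y) - u (x, y + h) + u (x, y)"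
    obtain \<xi> where \<xi>: "x < \<xi>" "\<xi> < x + h"
      "(u (x + h, y + h) - u (x + h, y)) - (u (x, y + h) - u (x, y)) = ((x + h) - x) * (pd1 u (\<xi>, y + h) - pd1 u (\<xi>, y))"
    proof -
      have der: "\<And>s. ((\<lambda>s. u (s, y + h) - u (s, y)) has_real_derivative pd1 u (s, y + h) - pd1 u (s, y)) (at s)"
        by (intro DERIV_diff pd1_at du)
      show ?thesis using MVT2[of x "x + h", OF _ der] h that by auto
    qed
    obtain \<eta> where \<eta>: "y < \<eta>" "\<eta> < y + h"
      "pd1 u (\<xi>, y + h) - pd1 u (\<xi>, y) = ((y + h) - y) * A (\<xi>, \<eta>)"
      using MVT2[of y "y + h" "\<lambda>t. pd1 u (\<xi>, t)" "\<lambda>t. A (\<xi>, t)"] h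
      unfolding A_def by (auto intro!: pd2_at d1u)
    obtain \<eta>' where \<eta>': "y < \<eta>'" "\<eta>' < y + h"
      "(u (x + h, y + h) - u (x, y + h)) - (u (x + h, y) - u (x, y)) = ((y + h) - y) * (pd2 u (x + h, \<eta>') - pd2 u (x, \<eta>'))"
    proof -
      have der: "\<And>t. ((\<lambda>t. u (x + h, t) - u (x, t)) has_real_derivative pd2 u (x + h, t) - pd2 u (x, t)) (at t)"
        by (intro DERIV_diff pd2_at du)
      show ?thesis using MVT2[of y "y + h", OF _ der] h that by auto
    qed
    obtain \<xi>' where \<xi>': "x < \<xi>'" "\<xi>' < x + h"
      "pd2 u (x + h, \<eta>') - pd2 u (x, \<eta>') = ((x + h) - x) * B (\<xi>', \<eta>')"
      using MVT2[of x "x + h" "\<lambda>s. pd2 u (s, \<eta>')" "\<lambda>s. B (s, \<eta>')"] h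
      unfolding B_def by (auto intro!: pd1_at d2u)
    have "h * (h * A (\<xi>, \<eta>)) = h * (h * B (\<xi>', \<eta>'))"
      using \<xi>(3) \<eta>(3) \<eta>'(3) \<xi>'(3) by (simp add: algebra_simps)
    then have AB: "A (\<xi>, \<eta>) = B (\<xi>', \<eta>')" using h(1) by simp
    have "dist (\<xi>, \<eta>) (x, y) < 2 * h" using \<xi> \<eta> by (intro dist_pair_lt) auto
    then have 1: "\<bar>A (\<xi>, \<eta>) - A (x, y)\<bar> < e" using dA(2) h unfolding dist_real_def by simp
    have "dist (\<xi>', \<eta>') (x, y) < 2 * h" using \<xi>' \<eta>' by (intro dist_pair_lt) auto
    then have 2: "\<bar>B (\<xi>', \<eta>') - B (x, y)\<bar> < e" using dB(2) h unfolding dist_real_def by simp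
    show ?thesis using 1 2 AB by linarith
  qed
  have "A (x, y) = B (x, y)"
  proof (rule ccontr)
    assume "A (x, y) \<noteq> B (x, y)"
    then have "\<bar>A (x, y) - B (x, y)\<bar> / 2 > 0" by simp
    from small[OF this] show False by simp
  qed
  then show ?thesis by (simp add: A_def B_def)
qed

lemma clairaut: "Sm u \<Longrightarrow> pd1 (pd2 u) = pd2 (pd1 u)"
  by (rule ext) (metis clairaut_pt surj_pair)


lemma Sm_funpow1: "Sm w \<Longrightarrow> Sm ((pd1 ^^ a) w)"
  by (induction a) (auto intro: Sm_pd1)

lemma Sm_funpow2: "Sm w \<Longrightarrow> Sm ((pd2 ^^ a) w)"
  by (induction a) (auto intro: Sm_pd2)

lemma pd2_funpow: "Sm w \<Longrightarrow> pd2 ((pd1 ^^ a) w) = (pd1 ^^ a) (pd2 w)"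
proof (induction a)
  case 0 then show ?case by simp
next
  case (Suc a)
  have "pd2 ((pd1 ^^ Suc a) w) = pd1 (pd2 ((pd1 ^^ a) w))"
    using clairaut[OF Sm_funpow1[OF Suc.prems, of a]] by simp
  then show ?case using Suc by simp
qed

lemma pdl_pdm: "Sm u \<Longrightarrow> pdl ds u = pdm (length (filter id ds)) (length (filter Not ds)) u"
proof (induction ds)
  case Nil then show ?case by (simp add: pdm_def)
next
  case (Cons d ds)
  show ?case
  proof (cases d)
    case True then show ?thesis using Cons by (simp add: pdl_Cons pdd_def pdm_def)
  next
    case False then show ?thesis using Cons
      by (simp add: pdl_Cons pdd_def pdm_def pd2_funpow Sm_funpow2)
  qed
qed

lemma pdm_pdl: "Sm u \<Longrightarrow> pdm a b u = pdl (replicate a True @ replicate b False) u"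
  by (subst pdl_pdm) auto

lemma Sm_pdm: "Sm u \<Longrightarrow> Sm (pdm a b u)"
  by (simp add: pdm_pdl Sm_pdl)

lemma pdl_perm: "Sm u \<Longrightarrow> length (filter id ds) = length (filter id es) \<Longrightarrow>
  length (filter Not ds) = length (filter Not es) \<Longrightarrow> pdl ds u = pdl es u"
  by (simp add: pdl_pdm)


definition per :: "sfun \<Rightarrow> bool" where
  "per u \<longleftrightarrow> (\<forall>x y. u (x + 2 * pi, y) = u (x, y) \<and> u (x, y + 2 * pi) = u (x, y))"

lemma per_pd1:
  assumes "Sm u" "per u" shows "per (pd1 u)"
  unfolding per_def
proof (intro allI conjI)
  fix x y
  have "((\<lambda>t. u (t, y)) has_real_derivative pd1 u (x + 2 * pi, y)) (at (x + 2 * pi))"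
    by (rule pd1_at[OF Sm_diff[OF assms(1)]])
  then have "((\<lambda>t. u (t + 2 * pi, y)) has_real_derivative pd1 u (x + 2 * pi, y)) (at x)"
    by (simp add: DERIV_shift)
  then have "((\<lambda>t. u (t, y)) has_real_derivative pd1 u (x + 2 * pi, y)) (at x)"
    using assms(2) unfolding per_def by simp
  moreover have "((\<lambda>t. u (t, y)) has_real_derivative pd1 u (x, y)) (at x)"
    by (rule pd1_at[OF Sm_diff[OF assms(1)]])
  ultimately show "pd1 u (x + 2 * pi, y) = pd1 u (x, y)" by (rule DERIV_unique)
  show "pd1 u (x, y + 2 * pi) = pd1 u (x, y)"
    using assms(2) unfolding per_def pd1_def by simp
qed

lemma per_pd2:
  assumes "Sm u" "per u" shows "per (pd2 u)"
  unfolding per_def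
proof (intro allI conjI)
  fix x y
  have "((\<lambda>t. u (x, t)) has_real_derivative pd2 u (x, y + 2 * pi)) (at (y + 2 * pi))"
    by (rule pd2_at[OF Sm_diff[OF assms(1)]])
  then have "((\<lambda>t. u (x, t + 2 * pi)) has_real_derivative pd2 u (x, y + 2 * pi)) (at y)"
    by (simp add: DERIV_shift)
  then have "((\<lambda>t. u (x, t)) has_real_derivative pd2 u (x, y + 2 * pi)) (at y)"
    using assms(2) unfolding per_def by simp
  moreover have "((\<lambda>t. u (x, t)) has_real_derivative pd2 u (x, y)) (at y)"
    by (rule pd2_at[OF Sm_diff[OF assms(1)]])
  ultimately show "pd2 u (x, y + 2 * pi) = pd2 u (x, y)" by (rule DERIV_unique)
  show "pd2 u (x + 2 * pi, y) = pd2 u (x, y)"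
    using assms(2) unfolding per_def pd2_def by simp
qed

lemma per_pdd: "Sm u \<Longrightarrow> per u \<Longrightarrow> per (pdd d u)"
  by (simp add: pdd_def per_pd1 per_pd2)

lemma per_pdl: "Sm u \<Longrightarrow> per u \<Longrightarrow> per (pdl ds u)"
  by (induction ds) (auto simp: pdl_Cons intro: per_pdd Sm_pdl)

lemma per_add: "per u \<Longrightarrow> per v \<Longrightarrow> per (\<lambda>z. u z + v z)"
  and per_mult: "per u \<Longrightarrow> per v \<Longrightarrow> per (\<lambda>z. u z * v z)"
  by (auto simp: per_def)

lemma smooth_periodic_iff: "smooth_periodic u \<longleftrightarrow> Sm u \<and> per u"
  by (simp add: smooth_periodic_def Sm_def per_def)

lemma T2_cbox: "T2 = cbox (-pi, -pi) (pi, pi)"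
  unfolding T2_def cbox_Pair_eq interval_cbox by (rule refl)

lemma int_T2: "continuous_on UNIV (f::sfun) \<Longrightarrow> f integrable_on T2"
  unfolding T2_cbox by (rule integrable_continuous) (auto intro: continuous_on_subset)

lemma Sm_int: "Sm u \<Longrightarrow> u integrable_on T2"
  by (rule int_T2[OF Sm_cont])

lemma fubini1:
  fixes F :: sfun
  assumes "continuous_on UNIV F"
  shows "integral T2 F = integral {-pi..pi} (\<lambda>x. integral {-pi..pi} (\<lambda>y. F (x, y)))"
  unfolding T2_cbox cbox_interval[symmetric]
  by (rule integral_prod_continuous) (auto intro: continuous_on_subset[OF assms])

lemma fubini2:
  fixes F :: sfun
  assumes "continuous_on UNIV F"
  shows "integral T2 F = integral {-pi..pi} (\<lambda>y. integral {-pi..pi} (\<lambda>x. F (x, y)))"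
proof -
  have "integral T2 F = integral {-pi..pi} (\<lambda>x. integral {-pi..pi} (\<lambda>y. F (x, y)))"
    by (rule fubini1[OF assms])
  also have "\<dots> = integral {-pi..pi} (\<lambda>y. integral {-pi..pi} (\<lambda>x. F (x, y)))"
    unfolding cbox_interval[symmetric]
    by (rule integral_swap_continuous) (auto intro: continuous_on_subset[OF assms])
  finally show ?thesis .
qed

lemma ftc_per:
  fixes g :: "real \<Rightarrow> real"
  assumes "\<And>t. (g has_real_derivative g' t) (at t)" "g pi = g (-pi)"
  shows "integral {-pi..pi} g' = 0"
proof -
  have "(g' has_integral (g pi - g (-pi))) {-pi..pi}"
    by (rule fundamental_theorem_of_calculus)
       (auto intro!: has_field_derivative_at_within assms(1) simp: has_real_derivative_iff_has_vector_derivative[symmetric])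
  then show ?thesis using assms(2) by (simp add: integral_unique)
qed

lemma int_pd1_zero:
  assumes "Sm F" "per F" shows "integral T2 (pd1 F) = 0"
proof -
  have "integral T2 (pd1 F) = integral {-pi..pi} (\<lambda>y. integral {-pi..pi} (\<lambda>x. pd1 F (x, y)))"
    by (rule fubini2) (intro Sm_cont Sm_pd1 assms)
  also have "\<dots> = integral {-pi..pi} (\<lambda>y. 0)"
  proof (rule integral_cong)
    fix y
    have "F (-pi + 2 * pi, y) = F (-pi, y)" using assms(2) unfolding per_def by blast
    then show "integral {-pi..pi} (\<lambda>x. pd1 F (x, y)) = 0"
      by (intro ftc_per[of "\<lambda>t. F (t, y)"] pd1_at Sm_diff assms) simp
  qed
  finally show ?thesis by simp
qed

lemma int_pd2_zero:
  assumes "Sm F" "per F" shows "integral T2 (pd2 F) = 0"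
proof -
  have "integral T2 (pd2 F) = integral {-pi..pi} (\<lambda>x. integral {-pi..pi} (\<lambda>y. pd2 F (x, y)))"
    by (rule fubini1) (intro Sm_cont Sm_pd2 assms)
  also have "\<dots> = integral {-pi..pi} (\<lambda>y. 0)"
  proof (rule integral_cong)
    fix x
    have "F (x, -pi + 2 * pi) = F (x, -pi)" using assms(2) unfolding per_def by blast
    then show "integral {-pi..pi} (\<lambda>y. pd2 F (x, y)) = 0"
      by (intro ftc_per[of "\<lambda>t. F (x, t)"] pd2_at Sm_diff assms) simp
  qed
  finally show ?thesis by simp
qed

lemma int_pdd_zero: "Sm F \<Longrightarrow> per F \<Longrightarrow> integral T2 (pdd d F) = 0"
  by (simp add: pdd_def int_pd1_zero int_pd2_zero)

lemma ibp:
  assumes "Sm f" "per f" "Sm W" "per W"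
  shows "integral T2 (\<lambda>z. f z * W z * pdd d W z) = - (1/2) * integral T2 (\<lambda>z. pdd d f z * W z * W z)"
proof -
  define F where "F = (\<lambda>z. f z * (W z * W z))"
  have SF: "Sm F" unfolding F_def using assms by (intro Sm_mult)
  have PF: "per F" unfolding F_def using assms by (intro per_mult)
  have "pdd d F = (\<lambda>z. pdd d f z * (W z * W z) + f z * (pdd d W z * W z + W z * pdd d W z))"
    unfolding F_def using assms
    by (simp add: pdd_mult Sm_don Sm_mult differentiable_on_mult)
  then have eq: "pdd d F = (\<lambda>z. pdd d f z * W z * W z + 2 * (f z * W z * pdd d W z))"
    by (simp add: algebra_simps)
  have i1: "(\<lambda>z. pdd d f z * W z * W z) integrable_on T2"
    using assms by (intro Sm_int Sm_mult Sm_pdd)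
  have i2: "(\<lambda>z. 2 * (f z * W z * pdd d W z)) integrable_on T2"
    using assms by (intro Sm_int Sm_mult Sm_pdd Sm_cmult)
  have "0 = integral T2 (pdd d F)" using int_pdd_zero[OF SF PF] by simp
  also have "\<dots> = integral T2 (\<lambda>z. pdd d f z * W z * W z) + 2 * integral T2 (\<lambda>z. f z * W z * pdd d W z)"
    unfolding eq integral_add[OF i1 i2] by simp
  finally show ?thesis by simp
qed


lemma L2sq_nonneg: "L2sq u \<ge> 0"
  unfolding L2sq_def
  by (cases "(\<lambda>z. (u z)\<^sup>2) integrable_on T2") (auto intro: integral_nonneg simp: not_integrable_integral)

lemma amgm: "(l::real) > 0 \<Longrightarrow> 2 * \<bar>x * y\<bar> \<le> l * x\<^sup>2 + y\<^sup>2 / l"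
proof -
  assume l: "l > 0"
  have "0 \<le> (l * \<bar>x\<bar> - \<bar>y\<bar>)\<^sup>2" by simp
  then have h: "2 * l * \<bar>x * y\<bar> \<le> l * l * x\<^sup>2 + y\<^sup>2"
    by (simp add: power2_eq_square algebra_simps abs_mult)
  have "2 * \<bar>x * y\<bar> = (2 * l * \<bar>x * y\<bar>) / l" using l by simp
  also have "\<dots> \<le> (l * l * x\<^sup>2 + y\<^sup>2) / l" by (rule divide_right_mono[OF h]) (use l in simp)
  also have "\<dots> = l * x\<^sup>2 + y\<^sup>2 / l" using l by (simp add: add_divide_distrib)
  finally show ?thesis .
qed

lemma cs:
  fixes A W :: sfun
  assumes cA: "continuous_on UNIV A" and cW: "continuous_on UNIV W"
  shows "integral T2 (\<lambda>z. \<bar>A z * W z\<bar>) \<le> sqrt (L2sq A) * sqrt (L2sq W)"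
proof -
  define a where "a = L2sq A"
  define w where "w = L2sq W"
  define I where "I = integral T2 (\<lambda>z. \<bar>A z * W z\<bar>)"
  have iA: "(\<lambda>z. (A z)\<^sup>2) integrable_on T2" by (intro int_T2 continuous_intros cA)
  have iW: "(\<lambda>z. (W z)\<^sup>2) integrable_on T2" by (intro int_T2 continuous_intros cW)
  have iAW: "(\<lambda>z. \<bar>A z * W z\<bar>) integrable_on T2" by (intro int_T2 continuous_intros cA cW)
  have a0: "a \<ge> 0" and w0: "w \<ge> 0" unfolding a_def w_def by (rule L2sq_nonneg)+
  have I0: "I \<ge> 0" unfolding I_def by (rule integral_nonneg[OF iAW]) simp
  have key: "2 * I \<le> l * a + w / l" if l: "l > 0" for l
  proof -
    have i2: "(\<lambda>z. l * (A z)\<^sup>2 + (W z)\<^sup>2 / l) integrable_on T2"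
      by (intro int_T2 continuous_intros cA cW) (use l in auto)
    have i1: "(\<lambda>z. 2 * \<bar>A z * W z\<bar>) integrable_on T2"
      by (intro int_T2 continuous_intros cA cW)
    have "2 * I = integral T2 (\<lambda>z. 2 * \<bar>A z * W z\<bar>)" unfolding I_def by simp
    also have "\<dots> \<le> integral T2 (\<lambda>z. l * (A z)\<^sup>2 + (W z)\<^sup>2 / l)"
      by (rule integral_le[OF i1 i2]) (use amgm[OF l] in auto)
    also have "\<dots> = l * a + w / l"
      unfolding a_def w_def L2sq_def
      by (subst integral_add) (use l in \<open>auto intro!: int_T2 continuous_intros cA cW\<close>)
    finally show ?thesis .
  qed
  have "I \<le> sqrt a * sqrt w"
  proof (cases "a > 0 \<and> w > 0")
    case True
    define l where "l = sqrt w / sqrt a"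
    have l: "l > 0" using True by (simp add: l_def)
    have sa: "sqrt a * sqrt a = a" and sw: "sqrt w * sqrt w = w" using True by auto
    have "l * a = sqrt w / sqrt a * (sqrt a * sqrt a)" using sa by (simp add: l_def)
    also have "\<dots> = sqrt a * sqrt w" using True by (simp add: field_simps)
    finally have "l * a = sqrt a * sqrt w" .
    moreover have "w / l = (sqrt w * sqrt w) / (sqrt w / sqrt a)" using sw by (simp add: l_def)
    moreover have "(sqrt w * sqrt w) / (sqrt w / sqrt a) = sqrt a * sqrt w" using True by (simp add: field_simps)
    ultimately show ?thesis using key[OF l] by simp
  next
    case False
    then have z: "a = 0 \<or> w = 0" using a0 w0 by auto
    show ?thesis
    proof (rule ccontr)
      assume "\<not> I \<le> sqrt a * sqrt w"
      then have Ip: "I > 0" using z by auto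
      show False
      proof (cases "a = 0")
        case True
        define l where "l = (w + 1) / I"
        have l: "l > 0" using Ip w0 by (simp add: l_def)
        have "2 * I \<le> w / l" using key[OF l] True by simp
        also have "\<dots> = w * I / (w + 1)" using Ip w0 by (simp add: l_def)
        also have "\<dots> < I" using Ip w0 by (simp add: field_simps)
        finally show False using Ip by simp
      next
        case False
        then have w: "w = 0" using z by simp
        define l where "l = I / (a + 1)"
        have l: "l > 0" using Ip a0 by (simp add: l_def)
        have "2 * I \<le> l * a" using key[OF l] w by simp
        also have "\<dots> = I * a / (a + 1)" by (simp add: l_def)
        also have "\<dots> < I" using Ip a0 by (simp add: field_simps)
        finally show False using Ip by simp
      qed
    qed
  qed
  then show ?thesis unfolding I_def a_def w_def .
qed

lemma finite_pairs: "finite {(a, b). (a::nat) + b \<le> k}"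
  by (rule finite_subset[of _ "{..k} \<times> {..k}"]) auto

lemma card_pairs: "card {(a, b). (a::nat) + b \<le> k} \<le> (k + 1) * (k + 1)"
proof -
  have "card {(a, b). (a::nat) + b \<le> k} \<le> card ({..k} \<times> {..k})"
    by (rule card_mono) auto
  then show ?thesis by (simp add: card_cartesian_product)
qed

lemma Hsq_nonneg: "Hsq k u \<ge> 0"
  unfolding Hsq_def by (intro sum_nonneg) (auto intro: L2sq_nonneg)

lemma Hdotsq_nonneg: "Hdotsq k u \<ge> 0"
  unfolding Hdotsq_def by (intro sum_nonneg) (auto intro: L2sq_nonneg)

lemma L2sq_le_Hsq: "a + b \<le> k \<Longrightarrow> L2sq (pdm a b u) \<le> Hsq k u"
  unfolding Hsq_def
  using member_le_sum[of "(a, b)" "{(a, b). a + b \<le> k}" "\<lambda>(a, b). L2sq (pdm a b u)"]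
  by (auto simp: finite_pairs L2sq_nonneg)

lemma L2sq_le_Hdotsq: "a + b = k \<Longrightarrow> L2sq (pdm a b u) \<le> Hdotsq k u"
proof -
  assume ab: "a + b = k"
  have fin: "finite {(a, b). (a::nat) + b = k}"
    by (rule finite_subset[of _ "{..k} \<times> {..k}"]) auto
  show ?thesis unfolding Hdotsq_def
    using member_le_sum[of "(a, b)" "{(a, b). a + b = k}" "\<lambda>(a, b). L2sq (pdm a b u)"] ab
    by (auto simp: fin L2sq_nonneg)
qed

lemma Hsq_mono: "k \<le> k' \<Longrightarrow> Hsq k u \<le> Hsq k' u"
  unfolding Hsq_def
  by (rule sum_mono2) (auto simp: finite_pairs L2sq_nonneg)

lemma L2sq_pdl_le: "Sm u \<Longrightarrow> length q \<le> k \<Longrightarrow> L2sq (pdl q u) \<le> Hsq k u"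
  using sum_length_filter_compl[of id q]
  by (auto simp: pdl_pdm intro!: L2sq_le_Hsq)

lemma Hsq_pdl: "Sm u \<Longrightarrow> Hsq 2 (pdl q u) \<le> 9 * Hsq (length q + 2) u"
proof -
  assume S: "Sm u"
  have "Hsq 2 (pdl q u) \<le> of_nat (card {(a, b). (a::nat) + b \<le> 2}) * Hsq (length q + 2) u"
    unfolding Hsq_def[of 2 "pdl q u"]
  proof (rule sum_bounded_above, goal_cases)
    case (1 ab)
    then obtain a b where ab: "ab = (a, b)" "a + b \<le> 2" by auto
    have "pdm a b (pdl q u) = pdl (replicate a True @ replicate b False @ q) u"
      using S by (simp add: pdm_pdl Sm_pdl pdl_append)
    then have "L2sq (pdm a b (pdl q u)) \<le> Hsq (length q + 2) u"
      using ab S by (auto intro!: L2sq_pdl_le)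
    then show ?case using ab by simp
  qed
  also have "\<dots> \<le> 9 * Hsq (length q + 2) u"
    using card_pairs[of 2] Hsq_nonneg[of "length q + 2" u]
    by (intro mult_right_mono) auto
  finally show ?thesis .
qed


lemma int_real: "continuous_on UNIV (f::real \<Rightarrow> real) \<Longrightarrow> f integrable_on {a..b}"
  by (rule integrable_continuous_real) (auto intro: continuous_on_subset)

lemma linf1:
  fixes \<phi> \<phi>' :: "real \<Rightarrow> real"
  assumes der: "\<And>t. (\<phi> has_real_derivative \<phi>' t) (at t)" and c': "continuous_on UNIV \<phi>'"
    and x: "x \<in> {-pi..pi}"
  shows "\<bar>\<phi> x\<bar> \<le> integral {-pi..pi} (\<lambda>t. \<bar>\<phi> t\<bar>) / (2 * pi) + integral {-pi..pi} (\<lambda>t. \<bar>\<phi>' t\<bar>)"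
proof -
  have cphi: "continuous_on UNIV \<phi>" using der
    by (meson DERIV_isCont continuous_at_imp_continuous_on)
  have "continuous_on {-pi..pi} (\<lambda>t. \<bar>\<phi> t\<bar>)"
    by (intro continuous_intros continuous_on_subset[OF cphi]) auto
  then obtain t0 where t0: "t0 \<in> {-pi..pi}" "\<And>t. t \<in> {-pi..pi} \<Longrightarrow> \<bar>\<phi> t0\<bar> \<le> \<bar>\<phi> t\<bar>"
    using continuous_attains_inf[of "{-pi..pi}" "\<lambda>t. \<bar>\<phi> t\<bar>"] by auto
  have "integral {-pi..pi} (\<lambda>t. \<bar>\<phi> t0\<bar>) \<le> integral {-pi..pi} (\<lambda>t. \<bar>\<phi> t\<bar>)"
    by (rule integral_le) (auto intro!: t0 int_real continuous_intros cphi)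
  then have m: "2 * pi * \<bar>\<phi> t0\<bar> \<le> integral {-pi..pi} (\<lambda>t. \<bar>\<phi> t\<bar>)" by simp
  define c where "c = min x t0"
  define d where "d = max x t0"
  have cd: "c \<le> d" "{c..d} \<subseteq> {-pi..pi}" using x t0 by (auto simp: c_def d_def)
  have "(\<phi>' has_integral (\<phi> d - \<phi> c)) {c..d}"
    by (rule fundamental_theorem_of_calculus[OF cd(1)])
       (auto intro!: has_field_derivative_at_within der simp: has_real_derivative_iff_has_vector_derivative[symmetric])
  then have "\<bar>\<phi> d - \<phi> c\<bar> = \<bar>integral {c..d} \<phi>'\<bar>" by (simp add: integral_unique)
  also have "\<dots> \<le> integral {c..d} (\<lambda>t. \<bar>\<phi>' t\<bar>)"
    using integral_norm_bound_integral[of \<phi>' "{c..d}" "\<lambda>t. \<bar>\<phi>' t\<bar>"]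
    by (auto intro!: int_real continuous_intros c')
  also have "\<dots> \<le> integral {-pi..pi} (\<lambda>t. \<bar>\<phi>' t\<bar>)"
    by (rule integral_subset_le[OF cd(2)]) (auto intro!: int_real continuous_intros c')
  finally have D: "\<bar>\<phi> d - \<phi> c\<bar> \<le> integral {-pi..pi} (\<lambda>t. \<bar>\<phi>' t\<bar>)" .
  have "\<bar>\<phi> x - \<phi> t0\<bar> = \<bar>\<phi> d - \<phi> c\<bar>" by (cases "x \<le> t0") (auto simp: c_def d_def)
  moreover have "\<bar>\<phi> t0\<bar> \<le> integral {-pi..pi} (\<lambda>t. \<bar>\<phi> t\<bar>) / (2 * pi)"
    using m by (simp add: field_simps)
  ultimately show ?thesis using D by linarith
qed

lemma cont_slice1: "continuous_on UNIV (h::sfun) \<Longrightarrow> continuous_on UNIV (\<lambda>s. h (s, y))"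
  by (rule continuous_on_compose2[of UNIV h]) (auto intro: continuous_intros)

lemma cont_slice2: "continuous_on UNIV (h::sfun) \<Longrightarrow> continuous_on UNIV (\<lambda>t. h (x, t))"
  by (rule continuous_on_compose2[of UNIV h]) (auto intro: continuous_intros)

lemma param_cont: "continuous_on UNIV (h::sfun) \<Longrightarrow> continuous_on UNIV (\<lambda>s. integral {-pi..pi} (\<lambda>t. h (s, t)))"
  using integral_continuous_on_param[of UNIV "-pi" pi "\<lambda>s t. h (s, t)"]
  by (auto simp: cbox_interval intro: continuous_on_subset)

lemma linf_step:
  assumes S: "Sm h" and y: "y \<in> {-pi..pi}"
  shows "integral {-pi..pi} (\<lambda>s. \<bar>h (s, y)\<bar>) \<le> integral T2 (\<lambda>z. \<bar>h z\<bar>) / (2 * pi) + integral T2 (\<lambda>z. \<bar>pd2 h z\<bar>)"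
proof -
  have ch: "continuous_on UNIV h" and c2: "continuous_on UNIV (pd2 h)"
    using S by (auto intro: Sm_cont Sm_pd2)
  have ca: "continuous_on UNIV (\<lambda>z. \<bar>h z\<bar>)" and ca2: "continuous_on UNIV (\<lambda>z. \<bar>pd2 h z\<bar>)"
    by (intro continuous_intros ch c2)+
  have "integral {-pi..pi} (\<lambda>s. \<bar>h (s, y)\<bar>) \<le> integral {-pi..pi} (\<lambda>s. integral {-pi..pi} (\<lambda>t. \<bar>h (s, t)\<bar>) / (2 * pi) + integral {-pi..pi} (\<lambda>t. \<bar>pd2 h (s, t)\<bar>))"
  proof (rule integral_le)
    show "(\<lambda>s. \<bar>h (s, y)\<bar>) integrable_on {-pi..pi}"
      by (intro int_real cont_slice1 ca)
    show "(\<lambda>s. integral {-pi..pi} (\<lambda>t. \<bar>h (s, t)\<bar>) / (2 * pi) + integral {-pi..pi} (\<lambda>t. \<bar>pd2 h (s, t)\<bar>)) integrable_on {-pi..pi}"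
      by (intro int_real continuous_intros param_cont ca ca2) auto
    fix s
    show "\<bar>h (s, y)\<bar> \<le> integral {-pi..pi} (\<lambda>t. \<bar>h (s, t)\<bar>) / (2 * pi) + integral {-pi..pi} (\<lambda>t. \<bar>pd2 h (s, t)\<bar>)"
      by (rule linf1[OF pd2_at[OF Sm_diff[OF S]] cont_slice2[OF c2] y])
  qed
  also have "\<dots> = integral {-pi..pi} (\<lambda>s. integral {-pi..pi} (\<lambda>t. \<bar>h (s, t)\<bar>)) / (2 * pi) + integral {-pi..pi} (\<lambda>s. integral {-pi..pi} (\<lambda>t. \<bar>pd2 h (s, t)\<bar>))"
    by (subst integral_add) (auto intro!: int_real continuous_intros param_cont ca ca2)
  also have "\<dots> = integral T2 (\<lambda>z. \<bar>h z\<bar>) / (2 * pi) + integral T2 (\<lambda>z. \<bar>pd2 h z\<bar>)"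
    using fubini1[OF ca] fubini1[OF ca2] by simp
  finally show ?thesis .
qed

lemma L2sq_one: "L2sq (\<lambda>z. 1) = (2 * pi)\<^sup>2"
  unfolding L2sq_def T2_cbox by (simp add: content_Pair power2_eq_square)

lemma L1_bound:
  assumes "continuous_on UNIV (h::sfun)"
  shows "integral T2 (\<lambda>z. \<bar>h z\<bar>) \<le> 2 * pi * sqrt (L2sq h)"
proof -
  have e: "sqrt (L2sq (\<lambda>z. 1)) = 2 * pi" unfolding L2sq_one
    by (subst real_sqrt_abs) simp
  have "integral T2 (\<lambda>z. \<bar>h z\<bar>) \<le> sqrt (L2sq h) * sqrt (L2sq (\<lambda>z. 1))"
    using cs[of h "\<lambda>z. 1"] assms by simp
  then show ?thesis using e by (simp add: mult.commute)
qed

lemma nrm_le: "a + b \<le> 2 \<Longrightarrow> sqrt (L2sq (pdm a b u)) \<le> sqrt (Hsq 2 u)"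
  by (rule real_sqrt_le_mono[OF L2sq_le_Hsq])

lemma linf:
  assumes S: "Sm u" and z: "z \<in> T2"
  shows "\<bar>u z\<bar> \<le> 11 * sqrt (Hsq 2 u)"
proof -
  obtain x y where xy: "z = (x, y)" "x \<in> {-pi..pi}" "y \<in> {-pi..pi}"
    using z unfolding T2_def by auto
  define N where "N = (\<lambda>h::sfun. integral T2 (\<lambda>z. \<bar>h z\<bar>))"
  define H where "H = sqrt (Hsq 2 u)"
  have S1: "Sm (pd1 u)" using S by (rule Sm_pd1)
  have s1: "\<bar>u (x, y)\<bar> \<le> integral {-pi..pi} (\<lambda>s. \<bar>u (s, y)\<bar>) / (2 * pi) + integral {-pi..pi} (\<lambda>s. \<bar>pd1 u (s, y)\<bar>)"
    by (rule linf1[OF pd1_at[OF Sm_diff[OF S]] cont_slice1[OF Sm_cont[OF S1]] xy(2)])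
  have s2: "integral {-pi..pi} (\<lambda>s. \<bar>u (s, y)\<bar>) \<le> N u / (2 * pi) + N (pd2 u)"
    unfolding N_def by (rule linf_step[OF S xy(3)])
  have s3: "integral {-pi..pi} (\<lambda>s. \<bar>pd1 u (s, y)\<bar>) \<le> N (pd1 u) / (2 * pi) + N (pd2 (pd1 u))"
    unfolding N_def by (rule linf_step[OF S1 xy(3)])
  have b0: "N u \<le> 2 * pi * H"
  proof -
    have "N u \<le> 2 * pi * sqrt (L2sq (pdm 0 0 u))" unfolding N_def
      using L1_bound[OF Sm_cont[OF S]] by (simp add: pdm_def)
    also have "\<dots> \<le> 2 * pi * H" unfolding H_def by (intro mult_left_mono nrm_le) auto
    finally show ?thesis .
  qed
  have b1: "N (pd1 u) \<le> 2 * pi * H"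
  proof -
    have "N (pd1 u) \<le> 2 * pi * sqrt (L2sq (pdm 1 0 u))" unfolding N_def
      using L1_bound[OF Sm_cont[OF S1]] by (simp add: pdm_def)
    also have "\<dots> \<le> 2 * pi * H" unfolding H_def by (intro mult_left_mono nrm_le) auto
    finally show ?thesis .
  qed
  have b2: "N (pd2 u) \<le> 2 * pi * H"
  proof -
    have "N (pd2 u) \<le> 2 * pi * sqrt (L2sq (pdm 0 1 u))" unfolding N_def
      using L1_bound[OF Sm_cont[OF Sm_pd2[OF S]]] by (simp add: pdm_def)
    also have "\<dots> \<le> 2 * pi * H" unfolding H_def by (intro mult_left_mono nrm_le) auto
    finally show ?thesis .
  qed
  have b12: "N (pd2 (pd1 u)) \<le> 2 * pi * H"
  proof -
    have "N (pd2 (pd1 u)) \<le> 2 * pi * sqrt (L2sq (pdm 1 1 u))" unfolding N_def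
      using L1_bound[OF Sm_cont[OF Sm_pd2[OF S1]]] clairaut[OF S] by (simp add: pdm_def)
    also have "\<dots> \<le> 2 * pi * H" unfolding H_def by (intro mult_left_mono nrm_le) auto
    finally show ?thesis .
  qed
  have H0: "H \<ge> 0" unfolding H_def using Hsq_nonneg by simp
  have "\<bar>u z\<bar> \<le> (N u / (2 * pi) + N (pd2 u)) / (2 * pi) + (N (pd1 u) / (2 * pi) + N (pd2 (pd1 u)))"
    using s1 s2 s3 xy(1) by (smt (verit) divide_right_mono pi_gt_zero)
  also have "\<dots> \<le> (H + 2 * pi * H) / (2 * pi) + (H + 2 * pi * H)"
  proof -
    have "N u / (2 * pi) \<le> H" using b0 by (simp add: field_simps)
    moreover have "N (pd1 u) / (2 * pi) \<le> H" using b1 by (simp add: field_simps)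
    ultimately show ?thesis using b2 b12
      by (smt (verit) divide_right_mono pi_gt_zero)
  qed
  also have "\<dots> = H / (2 * pi) + H + H + 2 * pi * H" by (simp add: field_simps)
  also have "\<dots> \<le> H + H + H + 8 * H"
  proof -
    have "H * 1 \<le> H * (pi * 2)" using H0 pi_gt3 by (intro mult_left_mono) auto
    then have "H / (2 * pi) \<le> H" using H0 pi_gt3 by (simp add: field_simps)
    moreover have "2 * pi * H \<le> 8 * H" using H0 pi_less_4 by (intro mult_right_mono) auto
    ultimately show ?thesis by linarith
  qed
  finally show ?thesis unfolding H_def by simp
qed


lemma tri_bound:
  fixes A B W :: sfun
  assumes cA: "continuous_on UNIV A" and cB: "continuous_on UNIV B" and cW: "continuous_on UNIV W"
    and M: "\<And>z. z \<in> T2 \<Longrightarrow> \<bar>B z\<bar> \<le> M"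
  shows "\<bar>integral T2 (\<lambda>z. A z * B z * W z)\<bar> \<le> M * (sqrt (L2sq A) * sqrt (L2sq W))"
proof -
  have "\<bar>integral T2 (\<lambda>z. A z * B z * W z)\<bar> \<le> integral T2 (\<lambda>z. \<bar>A z * B z * W z\<bar>)"
  proof -
    have i1: "(\<lambda>z. A z * B z * W z) integrable_on T2" by (intro int_T2 continuous_intros cA cB cW)
    have i2: "(\<lambda>z. \<bar>A z * B z * W z\<bar>) integrable_on T2" by (intro int_T2 continuous_intros cA cB cW)
    show ?thesis using integral_norm_bound_integral[OF i1 i2] by simp
  qed
  also have "\<dots> \<le> integral T2 (\<lambda>z. M * \<bar>A z * W z\<bar>)"
  proof (rule integral_le)
    show "(\<lambda>z. \<bar>A z * B z * W z\<bar>) integrable_on T2" by (intro int_T2 continuous_intros cA cB cW)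
    show "(\<lambda>z. M * \<bar>A z * W z\<bar>) integrable_on T2" by (intro int_T2 continuous_intros cA cB cW)
    fix z assume z: "z \<in> T2"
    have "\<bar>A z * B z * W z\<bar> = \<bar>B z\<bar> * \<bar>A z * W z\<bar>" by (simp add: abs_mult)
    also have "\<dots> \<le> M * \<bar>A z * W z\<bar>" by (rule mult_right_mono[OF M[OF z]]) simp
    finally show "\<bar>A z * B z * W z\<bar> \<le> M * \<bar>A z * W z\<bar>" .
  qed
  also have "\<dots> = M * integral T2 (\<lambda>z. \<bar>A z * W z\<bar>)" by simp
  also have "\<dots> \<le> M * (sqrt (L2sq A) * sqrt (L2sq W))"
  proof (rule mult_left_mono)
    show "integral T2 (\<lambda>z. \<bar>A z * W z\<bar>) \<le> sqrt (L2sq A) * sqrt (L2sq W)" by (rule cs[OF cA cW])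
    have "(0, 0) \<in> T2" unfolding T2_def using pi_ge_zero by auto
    then show "0 \<le> M" using M[of "(0, 0)"] by linarith
  qed
  finally show ?thesis .
qed

lemma linf3: "Sm u \<Longrightarrow> z \<in> T2 \<Longrightarrow> \<bar>pdl q u z\<bar> \<le> 33 * sqrt (Hsq (length q + 2) u)"
proof -
  assume S: "Sm u" and z: "z \<in> T2"
  have "\<bar>pdl q u z\<bar> \<le> 11 * sqrt (Hsq 2 (pdl q u))" by (rule linf[OF Sm_pdl[OF S] z])
  also have "\<dots> \<le> 11 * sqrt (9 * Hsq (length q + 2) u)"
    by (intro mult_left_mono real_sqrt_le_mono Hsq_pdl S) auto
  also have "\<dots> = 33 * sqrt (Hsq (length q + 2) u)" by (simp add: real_sqrt_mult)
  finally show ?thesis .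
qed

lemma sqrt_Hsq_mono: "k \<le> k' \<Longrightarrow> sqrt (Hsq k u) \<le> sqrt (Hsq k' u)"
  by (intro real_sqrt_le_mono Hsq_mono)

lemma rem_bound:
  assumes Sf: "Sm f" and Sh: "Sm h" and SW: "Sm W" and x: "x \<in> set (R ds)"
  shows "\<bar>integral T2 (\<lambda>z. tm f h x z * W z)\<bar> \<le> 33 * (
     (sqrt (Hsq (length ds div 2 + 1) (pd1 f)) + sqrt (Hsq (length ds div 2 + 1) (pd2 f))) * sqrt (Hsq (length ds - 1) h)
   + (sqrt (Hsq (length ds - 1) (pd1 f)) + sqrt (Hsq (length ds - 1) (pd2 f))) * sqrt (Hsq (length ds div 2 + 2) h))
   * sqrt (L2sq W)"
proof -
  define s where "s = length ds"
  obtain p q where xpq: "x = (p, q)" by force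
  from R_props[OF x] have p: "p \<noteq> []" and len: "length p + length q = s" using xpq s_def by auto
  obtain p' e where pe: "p = p' @ [e]" using p by (cases p rule: rev_cases) auto
  define A where "A = pdl p' (pdd e f)"
  define B where "B = pdl q h"
  have tmAB: "tm f h x z * W z = A z * B z * W z" for z
    unfolding tm_def A_def B_def xpq pe by (simp add: pdl_append pdl_Cons)
  have SA: "Sm A" unfolding A_def by (intro Sm_pdl Sm_pdd Sf)
  have SB: "Sm B" unfolding B_def by (intro Sm_pdl Sh)
  have lenj: "length p' + 1 + length q = s" using len pe by simp
  define Pf where "Pf k = sqrt (Hsq k (pd1 f)) + sqrt (Hsq k (pd2 f))" for k
  have ef: "sqrt (Hsq k (pdd e f)) \<le> Pf k" for k
    using Hsq_nonneg[of k "pd1 f"] Hsq_nonneg[of k "pd2 f"]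
    by (cases e) (auto simp: pdd_def Pf_def)
  have Pf0: "Pf k \<ge> 0" for k using Hsq_nonneg[of k "pd1 f"] Hsq_nonneg[of k "pd2 f"] by (simp add: Pf_def)
  define Hh where "Hh k = sqrt (Hsq k h)" for k
  have Hh0: "Hh k \<ge> 0" for k using Hsq_nonneg[of k h] by (simp add: Hh_def)
  define nW where "nW = sqrt (L2sq W)"
  have nW0: "nW \<ge> 0" using L2sq_nonneg[of W] by (simp add: nW_def)
  have I: "integral T2 (\<lambda>z. tm f h x z * W z) = integral T2 (\<lambda>z. A z * B z * W z)"
    by (simp only: tmAB)
  have main: "\<bar>integral T2 (\<lambda>z. A z * B z * W z)\<bar> \<le> 33 * (Pf (s div 2 + 1) * Hh (s - 1) + Pf (s - 1) * Hh (s div 2 + 2)) * nW"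
  proof (cases "length q \<le> s div 2")
    case True
    have Bb: "\<bar>B z\<bar> \<le> 33 * Hh (s div 2 + 2)" if "z \<in> T2" for z
    proof -
      have "\<bar>B z\<bar> \<le> 33 * sqrt (Hsq (length q + 2) h)" unfolding B_def by (rule linf3[OF Sh that])
      also have "\<dots> \<le> 33 * Hh (s div 2 + 2)" unfolding Hh_def using True
        by (intro mult_left_mono sqrt_Hsq_mono) auto
      finally show ?thesis .
    qed
    have nA: "sqrt (L2sq A) \<le> Pf (s - 1)"
    proof -
      have "sqrt (L2sq A) \<le> sqrt (Hsq (s - 1) (pdd e f))" unfolding A_def
        using lenj by (intro real_sqrt_le_mono L2sq_pdl_le Sm_pdd Sf) auto
      then show ?thesis using ef[of "s - 1"] by linarith
    qed
    have "\<bar>integral T2 (\<lambda>z. A z * B z * W z)\<bar> \<le> 33 * Hh (s div 2 + 2) * (sqrt (L2sq A) * nW)"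
      unfolding nW_def by (rule tri_bound[OF Sm_cont[OF SA] Sm_cont[OF SB] Sm_cont[OF SW] Bb])
    also have "\<dots> \<le> 33 * Hh (s div 2 + 2) * (Pf (s - 1) * nW)"
      using nA nW0 Hh0 by (intro mult_left_mono mult_right_mono) auto
    also have "\<dots> \<le> 33 * (Pf (s div 2 + 1) * Hh (s - 1) + Pf (s - 1) * Hh (s div 2 + 2)) * nW"
    proof -
      have "0 \<le> Pf (s div 2 + 1) * Hh (s - 1) * nW" using Pf0 Hh0 nW0 by simp
      then show ?thesis by (simp add: algebra_simps)
    qed
    finally show ?thesis .
  next
    case False
    have jb: "length p' + 2 \<le> s div 2 + 1" using False lenj by linarith
    have Ab: "\<bar>A z\<bar> \<le> 33 * Pf (s div 2 + 1)" if "z \<in> T2" for z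
    proof -
      have "\<bar>A z\<bar> \<le> 33 * sqrt (Hsq (length p' + 2) (pdd e f))" unfolding A_def
        by (rule linf3[OF Sm_pdd[OF Sf] that])
      also have "\<dots> \<le> 33 * sqrt (Hsq (s div 2 + 1) (pdd e f))"
        using jb by (intro mult_left_mono sqrt_Hsq_mono) auto
      also have "\<dots> \<le> 33 * Pf (s div 2 + 1)" using ef by (intro mult_left_mono) auto
      finally show ?thesis .
    qed
    have nB: "sqrt (L2sq B) \<le> Hh (s - 1)"
      unfolding B_def Hh_def using lenj by (intro real_sqrt_le_mono L2sq_pdl_le Sh) auto
    have "integral T2 (\<lambda>z. A z * B z * W z) = integral T2 (\<lambda>z. B z * A z * W z)"
      by (simp add: mult.commute)
    then have "\<bar>integral T2 (\<lambda>z. A z * B z * W z)\<bar> \<le> 33 * Pf (s div 2 + 1) * (sqrt (L2sq B) * nW)"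
      unfolding nW_def using tri_bound[OF Sm_cont[OF SB] Sm_cont[OF SA] Sm_cont[OF SW] Ab] by simp
    also have "\<dots> \<le> 33 * Pf (s div 2 + 1) * (Hh (s - 1) * nW)"
      using nB nW0 Pf0 by (intro mult_left_mono mult_right_mono) auto
    also have "\<dots> \<le> 33 * (Pf (s div 2 + 1) * Hh (s - 1) + Pf (s - 1) * Hh (s div 2 + 2)) * nW"
    proof -
      have "0 \<le> Pf (s - 1) * Hh (s div 2 + 2) * nW" using Pf0 Hh0 nW0 by simp
      then show ?thesis by (simp add: algebra_simps)
    qed
    finally show ?thesis .
  qed
  show ?thesis using main unfolding I Pf_def Hh_def nW_def s_def .
qed


lemma sum_list_mult_right: "(\<Sum>x\<leftarrow>L. h x) * (c::real) = (\<Sum>x\<leftarrow>L. h x * c)"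
  by (induction L) (auto simp: distrib_right)

lemma sum_list_mult_left: "(c::real) * (\<Sum>x\<leftarrow>L. h x) = (\<Sum>x\<leftarrow>L. c * h x)"
  by (induction L) (auto simp: distrib_left)

lemma int_sum_list:
  "(\<And>x. x \<in> set L \<Longrightarrow> F x integrable_on S) \<Longrightarrow>
   (\<lambda>z. \<Sum>x\<leftarrow>L. F x z) integrable_on S \<and> integral S (\<lambda>z. \<Sum>x\<leftarrow>L. (F x z :: real)) = (\<Sum>x\<leftarrow>L. integral S (F x))"
proof (induction L)
  case Nil then show ?case by (simp add: integrable_0)
next
  case (Cons a L)
  then have i: "F a integrable_on S" "(\<lambda>z. \<Sum>x\<leftarrow>L. F x z) integrable_on S"
    and e: "integral S (\<lambda>z. \<Sum>x\<leftarrow>L. F x z) = (\<Sum>x\<leftarrow>L. integral S (F x))" by auto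
  show ?case using integrable_add[OF i] integral_add[OF i] e by simp
qed

lemma sum_list_bound: "(\<And>x. x \<in> set L \<Longrightarrow> \<bar>t x\<bar> \<le> (M::real)) \<Longrightarrow> \<bar>\<Sum>x\<leftarrow>L. t x\<bar> \<le> real (length L) * M"
proof (induction L)
  case Nil then show ?case by simp
next
  case (Cons a L)
  then have "\<bar>t a\<bar> \<le> M" "\<bar>\<Sum>x\<leftarrow>L. t x\<bar> \<le> real (length L) * M" by auto
  then show ?case by (simp add: algebra_simps)
qed

lemma mono5:
  fixes a b c d e a' b' c' d' e' :: real
  assumes "0 \<le> a" "a \<le> a'" "0 \<le> b" "b \<le> b'" "0 \<le> c" "c \<le> c'" "0 \<le> d" "d \<le> d'" "0 \<le> e" "e \<le> e'"
  shows "(a * b + c * d) * e \<le> (a' * b' + c' * d') * e'"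
proof -
  have "a * b \<le> a' * b'" using assms by (intro mult_mono) auto
  moreover have "c * d \<le> c' * d'" using assms by (intro mult_mono) auto
  ultimately have "a * b + c * d \<le> a' * b' + c' * d'" by simp
  moreover have "0 \<le> a * b + c * d" using assms by simp
  ultimately show ?thesis using assms by (intro mult_mono) auto
qed

lemma decomp:
  assumes S1: "Sm f1" and S2: "Sm f2" and Sg: "Sm g"
  shows "pdm a b (advect f1 f2 g) = (\<lambda>z. f1 z * pd1 (pdm a b g) z + f2 z * pd2 (pdm a b g) z
     + (\<Sum>x\<leftarrow>R (replicate a True @ replicate b False). tm f1 (pd1 g) x z)
     + (\<Sum>x\<leftarrow>R (replicate a True @ replicate b False). tm f2 (pd2 g) x z))"
proof -
  define ds where "ds = replicate a True @ replicate b False"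
  have P1: "Sm (\<lambda>z. f1 z * pd1 g z)" using S1 Sg by (intro Sm_mult Sm_pd1)
  have P2: "Sm (\<lambda>z. f2 z * pd2 g z)" using S2 Sg by (intro Sm_mult Sm_pd2)
  have Sa: "Sm (advect f1 f2 g)" unfolding advect_def by (rule Sm_add[OF P1 P2])
  have c1: "pdl ds (pd1 g) = pd1 (pdl ds g)"
  proof -
    have "pdl ds (pd1 g) = pdl (ds @ [True]) g" by (simp add: pdl_append pdl_Cons pdd_def)
    also have "\<dots> = pdl (True # ds) g" by (rule pdl_perm[OF Sg]) auto
    finally show ?thesis by (simp add: pdl_Cons pdd_def)
  qed
  have c2: "pdl ds (pd2 g) = pd2 (pdl ds g)"
  proof -
    have "pdl ds (pd2 g) = pdl (ds @ [False]) g" by (simp add: pdl_append pdl_Cons pdd_def)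
    also have "\<dots> = pdl (False # ds) g" by (rule pdl_perm[OF Sg]) auto
    finally show ?thesis by (simp add: pdl_Cons pdd_def)
  qed
  have "pdm a b (advect f1 f2 g) = pdl ds (\<lambda>z. f1 z * pd1 g z + f2 z * pd2 g z)"
    using pdm_pdl[OF Sa] unfolding ds_def advect_def by simp
  also have "\<dots> = (\<lambda>z. pdl ds (\<lambda>z. f1 z * pd1 g z) z + pdl ds (\<lambda>z. f2 z * pd2 g z) z)"
    by (rule pdl_add[OF P1 P2])
  also have "\<dots> = (\<lambda>z. f1 z * pd1 (pdm a b g) z + f2 z * pd2 (pdm a b g) z
     + (\<Sum>x\<leftarrow>R ds. tm f1 (pd1 g) x z) + (\<Sum>x\<leftarrow>R ds. tm f2 (pd2 g) x z))"
  proof -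
    have pm: "pdm a b g = pdl ds g" using pdm_pdl[OF Sg] ds_def by simp
    show ?thesis unfolding leibniz[OF S1 Sm_pd1[OF Sg]] leibniz[OF S2 Sm_pd2[OF Sg]] c1 c2 pm
      by (simp add: algebra_simps)
  qed
  finally show ?thesis unfolding ds_def .
qed

lemma Sm_advect: "Sm f1 \<Longrightarrow> Sm f2 \<Longrightarrow> Sm g \<Longrightarrow> Sm (advect f1 f2 g)"
  unfolding advect_def by (intro Sm_add Sm_mult Sm_pd1 Sm_pd2)

lemma comp_bound:
  assumes S1: "Sm f1" and P1: "per f1" and S2: "Sm f2" and P2: "per f2" and Sg: "Sm g" and Pg: "per g"
    and ab: "a + b = s"
    and hW: "sqrt (L2sq (pdm a b g)) \<le> Hd"
    and hG1: "\<And>k. sqrt (Hsq k (pd1 g)) \<le> G1 k" and hG2: "\<And>k. sqrt (Hsq k (pd2 g)) \<le> G2 k"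
    and hF1: "\<And>k. sqrt (Hsq k (pd1 f1)) + sqrt (Hsq k (pd2 f1)) \<le> 2 * F1 k"
    and hF2: "\<And>k. sqrt (Hsq k (pd1 f2)) + sqrt (Hsq k (pd2 f2)) \<le> 2 * F2 k"
  shows "\<bar>integral T2 (\<lambda>z. pdm a b (advect f1 f2 g) z * pdm a b g z)\<bar>
    \<le> 11 / 2 * sqrt (Hsq 2 (\<lambda>z. pd1 f1 z + pd2 f2 z)) * L2sq (pdm a b g)
     + 2 ^ s * 66 * ((F1 (s div 2 + 1) * G1 (s - 1) + F1 (s - 1) * G1 (s div 2 + 2))
                   + (F2 (s div 2 + 1) * G2 (s - 1) + F2 (s - 1) * G2 (s div 2 + 2))) * Hd"
proof -
  define ds where "ds = replicate a True @ replicate b False"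
  define W where "W = pdm a b g"
  have lds: "length ds = s" using ab by (simp add: ds_def)
  have SW: "Sm W" unfolding W_def by (rule Sm_pdm[OF Sg])
  have PW: "per W" unfolding W_def pdm_pdl[OF Sg] by (rule per_pdl[OF Sg Pg])
  have cW: "continuous_on UNIV W" by (rule Sm_cont[OF SW])
  define t1 where "t1 x = integral T2 (\<lambda>z. tm f1 (pd1 g) x z * W z)" for x
  define t2 where "t2 x = integral T2 (\<lambda>z. tm f2 (pd2 g) x z * W z)" for x
  have itm1: "(\<lambda>z. tm f1 (pd1 g) x z * W z) integrable_on T2" for x
    unfolding tm_def by (intro int_T2 continuous_intros Sm_cont Sm_pdl Sm_pd1 Sg S1 SW)
  have itm2: "(\<lambda>z. tm f2 (pd2 g) x z * W z) integrable_on T2" for x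
    unfolding tm_def by (intro int_T2 continuous_intros Sm_cont Sm_pdl Sm_pd2 Sg S2 SW)
  have isum1: "(\<lambda>z. \<Sum>x\<leftarrow>R ds. tm f1 (pd1 g) x z * W z) integrable_on T2"
   and esum1: "integral T2 (\<lambda>z. \<Sum>x\<leftarrow>R ds. tm f1 (pd1 g) x z * W z) = (\<Sum>x\<leftarrow>R ds. t1 x)"
    using int_sum_list[of "R ds" "\<lambda>x z. tm f1 (pd1 g) x z * W z" T2] itm1 unfolding t1_def by auto
  have isum2: "(\<lambda>z. \<Sum>x\<leftarrow>R ds. tm f2 (pd2 g) x z * W z) integrable_on T2"
   and esum2: "integral T2 (\<lambda>z. \<Sum>x\<leftarrow>R ds. tm f2 (pd2 g) x z * W z) = (\<Sum>x\<leftarrow>R ds. t2 x)"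
    using int_sum_list[of "R ds" "\<lambda>x z. tm f2 (pd2 g) x z * W z" T2] itm2 unfolding t2_def by auto
  have im1: "(\<lambda>z. f1 z * W z * pd1 W z) integrable_on T2"
    by (intro int_T2 continuous_intros Sm_cont Sm_pd1 SW S1)
  have im2: "(\<lambda>z. f2 z * W z * pd2 W z) integrable_on T2"
    by (intro int_T2 continuous_intros Sm_cont Sm_pd2 SW S2)
  have pw: "pdm a b (advect f1 f2 g) z * W z = (f1 z * W z * pd1 W z + f2 z * W z * pd2 W z)
      + (\<Sum>x\<leftarrow>R ds. tm f1 (pd1 g) x z * W z) + (\<Sum>x\<leftarrow>R ds. tm f2 (pd2 g) x z * W z)" for z
    unfolding decomp[OF S1 S2 Sg] ds_def[symmetric] W_def[symmetric]
    by (simp add: sum_list_mult_left algebra_simps)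
  define Im where "Im = integral T2 (\<lambda>z. f1 z * W z * pd1 W z + f2 z * W z * pd2 W z)"
  have split: "integral T2 (\<lambda>z. pdm a b (advect f1 f2 g) z * W z) = Im + (\<Sum>x\<leftarrow>R ds. t1 x) + (\<Sum>x\<leftarrow>R ds. t2 x)"
    unfolding pw Im_def
    by (simp add: integral_add integrable_add im1 im2 isum1 isum2 esum1 esum2)
  define D where "D = (\<lambda>z. pd1 f1 z + pd2 f2 z)"
  have SD: "Sm D" unfolding D_def by (intro Sm_add Sm_pd1 Sm_pd2 S1 S2)
  have Imeq: "Im = - (1/2) * integral T2 (\<lambda>z. W z * D z * W z)"
  proof -
    have e1: "integral T2 (\<lambda>z. f1 z * W z * pd1 W z) = - (1/2) * integral T2 (\<lambda>z. pd1 f1 z * W z * W z)"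
      using ibp[OF S1 P1 SW PW, of True] by (simp add: pdd_def)
    have e2: "integral T2 (\<lambda>z. f2 z * W z * pd2 W z) = - (1/2) * integral T2 (\<lambda>z. pd2 f2 z * W z * W z)"
      using ibp[OF S2 P2 SW PW, of False] by (simp add: pdd_def)
    have j1: "(\<lambda>z. pd1 f1 z * W z * W z) integrable_on T2"
      by (intro int_T2 continuous_intros Sm_cont Sm_pd1 SW S1)
    have j2: "(\<lambda>z. pd2 f2 z * W z * W z) integrable_on T2"
      by (intro int_T2 continuous_intros Sm_cont Sm_pd2 SW S2)
    have "integral T2 (\<lambda>z. W z * D z * W z) = integral T2 (\<lambda>z. pd1 f1 z * W z * W z + pd2 f2 z * W z * W z)"
      unfolding D_def by (simp add: algebra_simps)
    also have "\<dots> = integral T2 (\<lambda>z. pd1 f1 z * W z * W z) + integral T2 (\<lambda>z. pd2 f2 z * W z * W z)"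
      by (rule integral_add[OF j1 j2])
    finally show ?thesis unfolding Im_def integral_add[OF im1 im2] e1 e2 by (simp add: field_simps)
  qed
  have DM: "\<bar>D z\<bar> \<le> 11 * sqrt (Hsq 2 D)" if "z \<in> T2" for z by (rule linf[OF SD that])
  have "\<bar>integral T2 (\<lambda>z. W z * D z * W z)\<bar> \<le> 11 * sqrt (Hsq 2 D) * (sqrt (L2sq W) * sqrt (L2sq W))"
    by (rule tri_bound[OF cW Sm_cont[OF SD] cW DM])
  also have "sqrt (L2sq W) * sqrt (L2sq W) = L2sq W" using L2sq_nonneg[of W] by simp
  finally have Imb: "\<bar>Im\<bar> \<le> 11 / 2 * sqrt (Hsq 2 D) * L2sq W" unfolding Imeq by (simp add: abs_mult)
  have F10: "F1 k \<ge> 0" for k using hF1[of k] real_sqrt_ge_zero[OF Hsq_nonneg[of k "pd1 f1"]] real_sqrt_ge_zero[OF Hsq_nonneg[of k "pd2 f1"]] by linarith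
  have F20: "F2 k \<ge> 0" for k using hF2[of k] real_sqrt_ge_zero[OF Hsq_nonneg[of k "pd1 f2"]] real_sqrt_ge_zero[OF Hsq_nonneg[of k "pd2 f2"]] by linarith
  have G10: "G1 k \<ge> 0" for k using hG1[of k] real_sqrt_ge_zero[OF Hsq_nonneg[of k "pd1 g"]] by linarith
  have G20: "G2 k \<ge> 0" for k using hG2[of k] real_sqrt_ge_zero[OF Hsq_nonneg[of k "pd2 g"]] by linarith
  have nW0: "0 \<le> sqrt (L2sq W)" using L2sq_nonneg[of W] by simp
  have Hd0: "Hd \<ge> 0" using hW nW0 unfolding W_def by linarith
  define B1 where "B1 = 33 * ((2 * F1 (s div 2 + 1)) * G1 (s - 1) + (2 * F1 (s - 1)) * G1 (s div 2 + 2)) * Hd"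
  define B2 where "B2 = 33 * ((2 * F2 (s div 2 + 1)) * G2 (s - 1) + (2 * F2 (s - 1)) * G2 (s div 2 + 2)) * Hd"
  have tb1: "\<bar>t1 x\<bar> \<le> B1" if x: "x \<in> set (R ds)" for x
  proof -
    have m: "((sqrt (Hsq (s div 2 + 1) (pd1 f1)) + sqrt (Hsq (s div 2 + 1) (pd2 f1))) * sqrt (Hsq (s - 1) (pd1 g))
      + (sqrt (Hsq (s - 1) (pd1 f1)) + sqrt (Hsq (s - 1) (pd2 f1))) * sqrt (Hsq (s div 2 + 2) (pd1 g))) * sqrt (L2sq W)
      \<le> ((2 * F1 (s div 2 + 1)) * G1 (s - 1) + (2 * F1 (s - 1)) * G1 (s div 2 + 2)) * Hd"
      by (rule mono5) (use hF1 hG1 hW nW0 in \<open>simp_all add: Hsq_nonneg W_def\<close>)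
    have "\<bar>t1 x\<bar> \<le> 33 * (((sqrt (Hsq (s div 2 + 1) (pd1 f1)) + sqrt (Hsq (s div 2 + 1) (pd2 f1))) * sqrt (Hsq (s - 1) (pd1 g))
      + (sqrt (Hsq (s - 1) (pd1 f1)) + sqrt (Hsq (s - 1) (pd2 f1))) * sqrt (Hsq (s div 2 + 2) (pd1 g))) * sqrt (L2sq W))"
      using rem_bound[OF S1 Sm_pd1[OF Sg] SW x] unfolding t1_def lds by (simp only: mult.assoc)
    also have "\<dots> \<le> 33 * (((2 * F1 (s div 2 + 1)) * G1 (s - 1) + (2 * F1 (s - 1)) * G1 (s div 2 + 2)) * Hd)"
      by (rule mult_left_mono[OF m]) simp
    finally show ?thesis unfolding B1_def by (simp only: mult.assoc)
  qed
  have tb2: "\<bar>t2 x\<bar> \<le> B2" if x: "x \<in> set (R ds)" for x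
  proof -
    have m: "((sqrt (Hsq (s div 2 + 1) (pd1 f2)) + sqrt (Hsq (s div 2 + 1) (pd2 f2))) * sqrt (Hsq (s - 1) (pd2 g))
      + (sqrt (Hsq (s - 1) (pd1 f2)) + sqrt (Hsq (s - 1) (pd2 f2))) * sqrt (Hsq (s div 2 + 2) (pd2 g))) * sqrt (L2sq W)
      \<le> ((2 * F2 (s div 2 + 1)) * G2 (s - 1) + (2 * F2 (s - 1)) * G2 (s div 2 + 2)) * Hd"
      by (rule mono5) (use hF2 hG2 hW nW0 in \<open>simp_all add: Hsq_nonneg W_def\<close>)
    have "\<bar>t2 x\<bar> \<le> 33 * (((sqrt (Hsq (s div 2 + 1) (pd1 f2)) + sqrt (Hsq (s div 2 + 1) (pd2 f2))) * sqrt (Hsq (s - 1) (pd2 g))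
      + (sqrt (Hsq (s - 1) (pd1 f2)) + sqrt (Hsq (s - 1) (pd2 f2))) * sqrt (Hsq (s div 2 + 2) (pd2 g))) * sqrt (L2sq W))"
      using rem_bound[OF S2 Sm_pd2[OF Sg] SW x] unfolding t2_def lds by (simp only: mult.assoc)
    also have "\<dots> \<le> 33 * (((2 * F2 (s div 2 + 1)) * G2 (s - 1) + (2 * F2 (s - 1)) * G2 (s div 2 + 2)) * Hd)"
      by (rule mult_left_mono[OF m]) simp
    finally show ?thesis unfolding B2_def by (simp only: mult.assoc)
  qed
  have lenR: "real (length (R ds)) \<le> 2 ^ s"
  proof -
    have "length (R ds) + 1 = 2 ^ s" using R_length[of ds] lds by simp
    then have "length (R ds) \<le> 2 ^ s" by linarith
    then have "real (length (R ds)) \<le> real (2 ^ s)" by (simp only: of_nat_le_iff)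
    then show ?thesis by simp
  qed
  have B10: "B1 \<ge> 0" unfolding B1_def using F10 G10 Hd0 by simp
  have B20: "B2 \<ge> 0" unfolding B2_def using F20 G20 Hd0 by simp
  have s1: "\<bar>\<Sum>x\<leftarrow>R ds. t1 x\<bar> \<le> 2 ^ s * B1"
    using sum_list_bound[of "R ds" t1 B1] tb1 lenR B10 by (meson mult_right_mono order_trans)
  have s2: "\<bar>\<Sum>x\<leftarrow>R ds. t2 x\<bar> \<le> 2 ^ s * B2"
    using sum_list_bound[of "R ds" t2 B2] tb2 lenR B20 by (meson mult_right_mono order_trans)
  have "\<bar>integral T2 (\<lambda>z. pdm a b (advect f1 f2 g) z * pdm a b g z)\<bar> \<le> \<bar>Im\<bar> + \<bar>\<Sum>x\<leftarrow>R ds. t1 x\<bar> + \<bar>\<Sum>x\<leftarrow>R ds. t2 x\<bar>"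
    using split unfolding W_def by linarith
  also have "\<dots> \<le> 11 / 2 * sqrt (Hsq 2 D) * L2sq W + 2 ^ s * B1 + 2 ^ s * B2"
    using Imb s1 s2 by linarith
  also have "\<dots> = 11 / 2 * sqrt (Hsq 2 (\<lambda>z. pd1 f1 z + pd2 f2 z)) * L2sq (pdm a b g)
     + 2 ^ s * 66 * ((F1 (s div 2 + 1) * G1 (s - 1) + F1 (s - 1) * G1 (s div 2 + 2))
                   + (F2 (s div 2 + 1) * G2 (s - 1) + F2 (s - 1) * G2 (s div 2 + 2))) * Hd"
    unfolding B1_def B2_def D_def W_def by (simp add: algebra_simps)
  finally show ?thesis .
qed

lemma hn1: "sqrt (Hsq k u1) \<le> Hnorm2 k u1 u2"
  unfolding Hnorm2_def using Hsq_nonneg[of k u2] by (intro real_sqrt_le_mono) simp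

lemma hn2: "sqrt (Hsq k u2) \<le> Hnorm2 k u1 u2"
  unfolding Hnorm2_def using Hsq_nonneg[of k u1] by (intro real_sqrt_le_mono) simp

lemma hnsum: "sqrt (Hsq k u1) + sqrt (Hsq k u2) \<le> 2 * Hnorm2 k u1 u2"
  using hn1[of k u1 u2] hn2[of k u2 u1] by simp

lemma hn0: "Hnorm2 k u1 u2 \<ge> 0"
  unfolding Hnorm2_def using Hsq_nonneg[of k u1] Hsq_nonneg[of k u2] by simp

theorem lemma2p2:
  fixes s0 :: nat
  assumes "s0 \<ge> 1"
  shows "\<exists>C. \<forall>f1 f2 g1 g2 a b.
    smooth_periodic f1 \<and> smooth_periodic f2 \<and> smooth_periodic g1 \<and> smooth_periodic g2 \<and>
    a + b = s0 \<longrightarrow>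
    \<bar>integral T2 (\<lambda>z. pdm a b (advect f1 f2 g1) z * pdm a b g1 z
                       + pdm a b (advect f1 f2 g2) z * pdm a b g2 z)\<bar>
    \<le> C * ( (Hnorm2 (s0 div 2 + 1) (pd1 f1) (pd2 f1) * Hnorm2 (s0 - 1) (pd1 g1) (pd1 g2)
              + Hnorm2 (s0 div 2 + 1) (pd1 f2) (pd2 f2) * Hnorm2 (s0 - 1) (pd2 g1) (pd2 g2))
              * Hdotnorm2 s0 g1 g2
            + (Hnorm2 (s0 - 1) (pd1 f1) (pd2 f1) * Hnorm2 (s0 div 2 + 2) (pd1 g1) (pd1 g2)
              + Hnorm2 (s0 - 1) (pd1 f2) (pd2 f2) * Hnorm2 (s0 div 2 + 2) (pd2 g1) (pd2 g2))
              * Hdotnorm2 s0 g1 g2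
            + Hnorm 2 (\<lambda>z. pd1 f1 z + pd2 f2 z) * (Hdotnorm2 s0 g1 g2)\<^sup>2 )"
proof (rule exI[of _ "132 * 2 ^ s0 + 6"], intro allI impI)
  fix f1 f2 g1 g2 :: sfun and a b :: nat
  assume H: "smooth_periodic f1 \<and> smooth_periodic f2 \<and> smooth_periodic g1 \<and> smooth_periodic g2 \<and> a + b = s0"
  then have S1: "Sm f1" and P1: "per f1" and S2: "Sm f2" and P2: "per f2"
    and Sg1: "Sm g1" and Pg1: "per g1" and Sg2: "Sm g2" and Pg2: "per g2" and ab: "a + b = s0"
    by (auto simp: smooth_periodic_iff)
  define F1 where "F1 k = Hnorm2 k (pd1 f1) (pd2 f1)" for k
  define F2 where "F2 k = Hnorm2 k (pd1 f2) (pd2 f2)" for k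
  define G1 where "G1 k = Hnorm2 k (pd1 g1) (pd1 g2)" for k
  define G2 where "G2 k = Hnorm2 k (pd2 g1) (pd2 g2)" for k
  define Hd where "Hd = Hdotnorm2 s0 g1 g2"
  define D where "D = sqrt (Hsq 2 (\<lambda>z. pd1 f1 z + pd2 f2 z))"
  have Hd2: "Hd\<^sup>2 = Hdotsq s0 g1 + Hdotsq s0 g2"
    unfolding Hd_def Hdotnorm2_def using Hdotsq_nonneg[of s0 g1] Hdotsq_nonneg[of s0 g2] by simp
  have Hd0: "Hd \<ge> 0" unfolding Hd_def Hdotnorm2_def using Hdotsq_nonneg[of s0 g1] Hdotsq_nonneg[of s0 g2] by simp
  have D0: "D \<ge> 0" unfolding D_def using Hsq_nonneg by simp
  have hW1: "sqrt (L2sq (pdm a b g1)) \<le> Hd"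
    unfolding Hd_def Hdotnorm2_def using L2sq_le_Hdotsq[OF ab, of g1] Hdotsq_nonneg[of s0 g2]
    by (intro real_sqrt_le_mono) simp
  have hW2: "sqrt (L2sq (pdm a b g2)) \<le> Hd"
    unfolding Hd_def Hdotnorm2_def using L2sq_le_Hdotsq[OF ab, of g2] Hdotsq_nonneg[of s0 g1]
    by (intro real_sqrt_le_mono) simp
  have L2W: "L2sq (pdm a b g1) + L2sq (pdm a b g2) \<le> Hd\<^sup>2"
    unfolding Hd2 using L2sq_le_Hdotsq[OF ab, of g1] L2sq_le_Hdotsq[OF ab, of g2] by simp
  define Q where "Q = (F1 (s0 div 2 + 1) * G1 (s0 - 1) + F1 (s0 - 1) * G1 (s0 div 2 + 2))
                   + (F2 (s0 div 2 + 1) * G2 (s0 - 1) + F2 (s0 - 1) * G2 (s0 div 2 + 2))"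
  have cb1: "\<bar>integral T2 (\<lambda>z. pdm a b (advect f1 f2 g1) z * pdm a b g1 z)\<bar>
    \<le> 11 / 2 * D * L2sq (pdm a b g1) + 2 ^ s0 * 66 * Q * Hd"
    unfolding D_def Q_def
    by (rule comp_bound[OF S1 P1 S2 P2 Sg1 Pg1 ab hW1])
       (auto simp: F1_def F2_def G1_def G2_def intro: hn1 hnsum)
  have cb2: "\<bar>integral T2 (\<lambda>z. pdm a b (advect f1 f2 g2) z * pdm a b g2 z)\<bar>
    \<le> 11 / 2 * D * L2sq (pdm a b g2) + 2 ^ s0 * 66 * Q * Hd"
    unfolding D_def Q_def
    by (rule comp_bound[OF S1 P1 S2 P2 Sg2 Pg2 ab hW2])
       (auto simp: F1_def F2_def G1_def G2_def intro: hn2 hnsum)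
  have i1: "(\<lambda>z. pdm a b (advect f1 f2 g1) z * pdm a b g1 z) integrable_on T2"
    by (intro int_T2 continuous_intros Sm_cont Sm_pdm Sm_advect S1 S2 Sg1)
  have i2: "(\<lambda>z. pdm a b (advect f1 f2 g2) z * pdm a b g2 z) integrable_on T2"
    by (intro int_T2 continuous_intros Sm_cont Sm_pdm Sm_advect S1 S2 Sg2)
  define X where "X = (F1 (s0 div 2 + 1) * G1 (s0 - 1) + F2 (s0 div 2 + 1) * G2 (s0 - 1)) * Hd"
  define Y where "Y = (F1 (s0 - 1) * G1 (s0 div 2 + 2) + F2 (s0 - 1) * G2 (s0 div 2 + 2)) * Hd"
  define Z where "Z = D * Hd\<^sup>2"
  have X0: "X \<ge> 0" unfolding X_def F1_def F2_def G1_def G2_def using Hd0 hn0 by simp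
  have Y0: "Y \<ge> 0" unfolding Y_def F1_def F2_def G1_def G2_def using Hd0 hn0 by simp
  have Z0: "Z \<ge> 0" unfolding Z_def using D0 by simp
  have QXY: "Q * Hd = X + Y" unfolding Q_def X_def Y_def by (simp add: algebra_simps)
  have "\<bar>integral T2 (\<lambda>z. pdm a b (advect f1 f2 g1) z * pdm a b g1 z + pdm a b (advect f1 f2 g2) z * pdm a b g2 z)\<bar>
      \<le> \<bar>integral T2 (\<lambda>z. pdm a b (advect f1 f2 g1) z * pdm a b g1 z)\<bar> + \<bar>integral T2 (\<lambda>z. pdm a b (advect f1 f2 g2) z * pdm a b g2 z)\<bar>"
    unfolding integral_add[OF i1 i2] by (rule abs_triangle_ineq)
  also have "\<dots> \<le> 11 / 2 * D * (L2sq (pdm a b g1) + L2sq (pdm a b g2)) + 2 ^ s0 * 132 * (Q * Hd)"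
  proof -
    have eq: "11 / 2 * D * (L2sq (pdm a b g1) + L2sq (pdm a b g2)) + 2 ^ s0 * 132 * (Q * Hd)
      = (11 / 2 * D * L2sq (pdm a b g1) + 2 ^ s0 * 66 * Q * Hd) + (11 / 2 * D * L2sq (pdm a b g2) + 2 ^ s0 * 66 * Q * Hd)"
      by (simp add: algebra_simps)
    show ?thesis using cb1 cb2 unfolding eq by linarith
  qed
  also have "\<dots> \<le> 11 / 2 * Z + 2 ^ s0 * 132 * (X + Y)"
    unfolding QXY Z_def using L2W D0 by (simp add: mult_left_mono)
  also have "\<dots> \<le> (132 * 2 ^ s0 + 6) * (X + Y + Z)"
    using X0 Y0 Z0 by (simp add: algebra_simps)
  finally show "\<bar>integral T2 (\<lambda>z. pdm a b (advect f1 f2 g1) z * pdm a b g1 z + pdm a b (advect f1 f2 g2) z * pdm a b g2 z)\<bar>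
    \<le> (132 * 2 ^ s0 + 6) * ( (Hnorm2 (s0 div 2 + 1) (pd1 f1) (pd2 f1) * Hnorm2 (s0 - 1) (pd1 g1) (pd1 g2)
              + Hnorm2 (s0 div 2 + 1) (pd1 f2) (pd2 f2) * Hnorm2 (s0 - 1) (pd2 g1) (pd2 g2))
              * Hdotnorm2 s0 g1 g2
            + (Hnorm2 (s0 - 1) (pd1 f1) (pd2 f1) * Hnorm2 (s0 div 2 + 2) (pd1 g1) (pd1 g2)
              + Hnorm2 (s0 - 1) (pd1 f2) (pd2 f2) * Hnorm2 (s0 div 2 + 2) (pd2 g1) (pd2 g2))
              * Hdotnorm2 s0 g1 g2
            + Hnorm 2 (\<lambda>z. pd1 f1 z + pd2 f2 z) * (Hdotnorm2 s0 g1 g2)\<^sup>2 )"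
    unfolding X_def Y_def Z_def F1_def F2_def G1_def G2_def Hd_def D_def Hnorm_def .
qed

end
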